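(* Let $M, K, P, N$ be positive integers with $M \le K \le P$ and such that $P$ divides $N$. Let $\mathbf{A} = [\mathbf{a}_1, \ldots, \mathbf{a}_M]^T \in \mathbb{R}^{M \times N}$ be any matrix, and let $\mathbf{B} \in \mathbb{R}^{P \times K}$ be a matrix such that every square sub-matrix of $\mathbf{B}$ is invertible. For vectors $\mathbf{z}_1, \ldots, \mathbf{z}_{K-M} \in \mathbb{R}^N$, let $\tilde{\mathbf{A}} = [\mathbf{a}_1, \ldots, \mathbf{a}_M, \mathbf{z}_1, \ldots, \mathbf{z}_{K-M}]^T \in \mathbb{R}^{K \times N}$ be the matrix obtained by appending the rows $\mathbf{z}_1^T, \ldots, \mathbf{z}_{K-M}^T$ to $\mathbf{A}$. Then there exists a choice of $\mathbf{z}_1, \ldots, \mathbf{z}_{K-M}$ such that every row of $\mathbf{F} = \mathbf{B}\tilde{\mathbf{A}}$ has sparsity at most $s = \frac{N}{P}(P-K+M)$.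
   Context: The sparsity of a vector is its number of nonzero entries. A square sub-matrix of $\mathbf{B}$ is a matrix obtained by selecting some set of $r$ rows and some set of $r$ columns of $\mathbf{B}$ (for any $r \ge 1$). *)

theory Defs
  imports "Jordan_Normal_Form.Matrix" "Jordan_Normal_Form.DL_Submatrix"
begin

definition sparsity :: "'a :: zero vec \<Rightarrow> nat" where
  "sparsity v = card {i. i < dim_vec v \<and> v $ i \<noteq> 0}"

definition all_square_submatrices_invertible :: "'a :: comm_ring_1 mat \<Rightarrow> bool" where
  "all_square_submatrices_invertible B \<longleftrightarrow>
     (\<forall>R C. R \<subseteq> {..<dim_row B} \<longrightarrow> C \<subseteq> {..<dim_col B} \<longrightarrow>
        card R = card C \<longrightarrow> card R \<ge> 1 \<longrightarrow> invertible_mat (submatrix B R C))"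

end

theory Submission
  imports Defs
begin

lemma pick_interval:
  assumes "c < K - M" shows "pick {M..<K} c = M + c"
proof -
  have "{a \<in> {M..<K}. a < M + c} = {M..<M+c}" using assms by auto
  hence "card {a \<in> {M..<K}. a < M + c} = c" by simp
  moreover have "M + c \<in> {M..<K}" using assms by auto
  ultimately show ?thesis using pick_card_in_set[of "M+c" "{M..<K}"] by simp
qed

lemma pick_surj:
  assumes "finite S" "i \<in> S"
  shows "\<exists>r < card S. pick S r = i"
proof -
  have "{a\<in>S. a < i} \<subset> S" using assms by auto
  hence "card {a\<in>S. a < i} < card S" using assms by (simp add: psubset_card_mono)
  thus ?thesis using pick_card_in_set[OF assms(2)] by blast
qed

lemma solve:
  fixes B :: "real mat"
  assumes B: "B \<in> carrier_mat P K" and inv: "all_square_submatrices_invertible B"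
    and S: "S \<subseteq> {..<P}" "card S = K - M" and MK: "M \<le> K"
  shows "\<exists>z \<in> carrier_vec (K-M). \<forall>i\<in>S.
     (\<Sum>c<M. B $$ (i,c) * a c) + (\<Sum>c<K-M. B $$ (i, M+c) * z $ c) = 0"
proof (cases "K = M")
  case True
  have "finite S" using S finite_subset by blast
  hence "S = {}" using S True by simp
  thus ?thesis by (intro bexI[of _ "vec 0 (\<lambda>_. 0)"]) (auto simp: True)
next
  case False
  have fS: "finite S" using S finite_subset by blast
  define C where "C = {M..<K}"
  define Bs where "Bs = submatrix B S C"
  have r1: "{i. i < dim_row B \<and> i \<in> S} = S" using S B by auto
  have c1: "{j. j < dim_col B \<and> j \<in> C} = C" using B by (auto simp: C_def)
  have cardC: "card C = K - M" by (simp add: C_def)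
  have CK: "C \<subseteq> {..<dim_col B}" using B by (auto simp: C_def)
  have SP: "S \<subseteq> {..<dim_row B}" using B S by auto
  have "card S \<ge> 1" using S False MK by simp
  hence "invertible_mat Bs" using inv SP CK S cardC unfolding all_square_submatrices_invertible_def Bs_def
    by simp
  then obtain Bi where i1': "inverts_mat Bs Bi" and i2': "inverts_mat Bi Bs"
    unfolding invertible_mat_def by blast
  have i1: "Bs * Bi = 1\<^sub>m (dim_row Bs)" using i1' unfolding inverts_mat_def .
  have i2: "Bi * Bs = 1\<^sub>m (dim_row Bi)" using i2' unfolding inverts_mat_def .
  have dBs: "Bs \<in> carrier_mat (K-M) (K-M)" unfolding Bs_def carrier_mat_def
    using S cardC by (simp add: dim_submatrix r1 c1)
  have dBi: "Bi \<in> carrier_mat (K-M) (K-M)"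
  proof -
    have "dim_col (Bs * Bi) = dim_col (1\<^sub>m (dim_row Bs) :: real mat)" using i1 by (rule arg_cong)
    hence a: "dim_col Bi = K - M" using dBs by simp
    have "dim_col (Bi * Bs) = dim_col (1\<^sub>m (dim_row Bi) :: real mat)" using i2 by (rule arg_cong)
    hence b: "dim_row Bi = K - M" using dBs by simp
    show ?thesis by (rule carrier_matI[OF b a])
  qed
  define y where "y = vec (K-M) (\<lambda>r. - (\<Sum>c<M. B $$ (pick S r,c) * a c))"
  define z where "z = Bi *\<^sub>v y"
  have yc: "y \<in> carrier_vec (K-M)" unfolding y_def by (rule vec_carrier)
  have zc: "z \<in> carrier_vec (K-M)" unfolding z_def by (rule mult_mat_vec_carrier[OF dBi yc])
  have "Bs *\<^sub>v z = y"
  proof -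
    have "Bs *\<^sub>v (Bi *\<^sub>v y) = (Bs * Bi) *\<^sub>v y"
      by (rule assoc_mult_mat_vec[OF dBs dBi yc, symmetric])
    also have "\<dots> = 1\<^sub>m (K-M) *\<^sub>v y" by (simp only: i1 carrier_matD(1)[OF dBs])
    also have "\<dots> = y" by (rule one_mult_mat_vec[OF yc])
    finally show ?thesis by (simp only: z_def)
  qed
  have key: "(\<Sum>c<M. B $$ (pick S r,c) * a c) + (\<Sum>c<K-M. B $$ (pick S r, M+c) * z $ c) = 0"
    if r: "r < K - M" for r
  proof -
    have "(Bs *\<^sub>v z) $ r = (\<Sum>c<K-M. B $$ (pick S r, M+c) * z $ c)"
    proof -
      have rB: "r < dim_row Bs" using r dBs by simp
      have dz: "dim_vec z = K - M" using zc by simp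
      have "(Bs *\<^sub>v z) $ r = row Bs r \<bullet> z" by (rule index_mult_mat_vec[OF rB])
      also have "\<dots> = (\<Sum>c\<in>{0..<K-M}. row Bs r $ c * z $ c)" unfolding scalar_prod_def dz ..
      also have "\<dots> = (\<Sum>c\<in>{0..<K-M}. Bs $$ (r,c) * z $ c)"
      proof (rule sum.cong[OF refl])
        fix c assume "c \<in> {0..<K-M}"
        hence "c < dim_col Bs" using dBs by simp
        thus "row Bs r $ c * z $ c = Bs $$ (r,c) * z $ c" using index_row(1)[OF rB] by simp
      qed
      also have "\<dots> = (\<Sum>c<K-M. Bs $$ (r,c) * z $ c)" by (simp add: atLeast0LessThan)
      finally have "(Bs *\<^sub>v z) $ r = (\<Sum>c<K-M. Bs $$ (r,c) * z $ c)" .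
      also have "\<dots> = (\<Sum>c<K-M. B $$ (pick S r, M+c) * z $ c)"
      proof (rule sum.cong)
        fix c assume "c \<in> {..<K-M}"
        hence c: "c < K - M" by simp
        have "Bs $$ (r,c) = B $$ (pick S r, pick C c)" unfolding Bs_def
          by (rule submatrix_index) (use r c S cardC in \<open>simp_all add: r1 c1\<close>)
        also have "pick C c = M + c" unfolding C_def by (rule pick_interval[OF c])
        finally show "Bs $$ (r,c) * z $ c = B $$ (pick S r, M+c) * z $ c" by simp
      qed auto
      finally show ?thesis .
    qed
    moreover have "(Bs *\<^sub>v z) $ r = - (\<Sum>c<M. B $$ (pick S r,c) * a c)"
      using \<open>Bs *\<^sub>v z = y\<close> r by (simp add: y_def)
    ultimately show ?thesis by simp
  qed
  show ?thesis
  proof (intro bexI[OF _ zc] ballI)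
    fix i assume "i \<in> S"
    then obtain r where "r < card S" "pick S r = i" using pick_surj fS by blast
    thus "(\<Sum>c<M. B $$ (i,c) * a c) + (\<Sum>c<K-M. B $$ (i, M+c) * z $ c) = 0" using key S by auto
  qed
qed
lemma card_preimage_bij:
  assumes "bij_betw f A B" "T \<subseteq> B"
  shows "card {x\<in>A. f x \<in> T} = card T"
proof -
  have "bij_betw f {x\<in>A. f x \<in> T} T"
    unfolding bij_betw_def
  proof
    show "inj_on f {x\<in>A. f x \<in> T}" using assms(1) unfolding bij_betw_def by (auto intro: inj_on_subset)
    show "f ` {x\<in>A. f x \<in> T} = T" using assms unfolding bij_betw_def by auto
  qed
  thus ?thesis by (rule bij_betw_same_card)
qed

definition dd :: "nat \<Rightarrow> nat \<Rightarrow> nat \<Rightarrow> nat" where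
  "dd P r i = nat ((int i - int r) mod int P)"

lemma dd_lt: "0 < P \<Longrightarrow> dd P r i < P"
  unfolding dd_def by (simp add: nat_less_iff)

lemma int_dd: "0 < P \<Longrightarrow> int (dd P r i) = (int i - int r) mod int P"
  unfolding dd_def by simp

lemma bij_dd_i:
  assumes "0 < P" "r < P"
  shows "bij_betw (\<lambda>i. dd P r i) {..<P} {..<P}"
proof (rule bij_betw_byWitness[where f'="\<lambda>t. (t + r) mod P"])
  show "\<forall>a\<in>{..<P}. (dd P r a + r) mod P = a"
  proof
    fix a assume a: "a \<in> {..<P}"
    have "int ((dd P r a + r) mod P) = ((int a - int r) mod int P + int r) mod int P"
      using assms by (simp add: int_dd zmod_int)
    also have "\<dots> = (int a - int r + int r) mod int P" by (simp add: mod_add_left_eq)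
    also have "\<dots> = int a" using a by simp
    finally show "(dd P r a + r) mod P = a" by simp
  qed
  show "\<forall>a'\<in>{..<P}. dd P r ((a' + r) mod P) = a'"
  proof
    fix a assume a: "a \<in> {..<P}"
    have "int (dd P r ((a + r) mod P)) = ((int a + int r) mod int P - int r) mod int P"
      using assms by (simp add: int_dd zmod_int)
    also have "\<dots> = (int a + int r - int r) mod int P" by (simp add: mod_diff_left_eq)
    also have "\<dots> = int a" using a by simp
    finally show "dd P r ((a + r) mod P) = a" by simp
  qed
  show "(\<lambda>i. dd P r i) ` {..<P} \<subseteq> {..<P}" using dd_lt assms by auto
  show "(\<lambda>t. (t + r) mod P) ` {..<P} \<subseteq> {..<P}" using assms by auto
qed

lemma bij_dd_r:
  assumes "0 < P" "i < P"
  shows "bij_betw (\<lambda>r. dd P r i) {..<P} {..<P}"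
proof (rule bij_betw_byWitness[where f'="\<lambda>t. dd P t i"])
  have inv: "dd P (dd P a i) i = a" if a: "a < P" for a
  proof -
    have "int (dd P (dd P a i) i) = (int i - (int i - int a) mod int P) mod int P"
      using assms by (simp add: int_dd)
    also have "\<dots> = (int i - (int i - int a)) mod int P" by (simp add: mod_diff_right_eq)
    also have "\<dots> = int a" using a by simp
    finally show ?thesis by simp
  qed
  show "\<forall>a\<in>{..<P}. dd P (dd P a i) i = a" using inv by auto
  show "\<forall>a\<in>{..<P}. dd P (dd P a i) i = a" using inv by auto
  show "(\<lambda>r. dd P r i) ` {..<P} \<subseteq> {..<P}" using dd_lt assms by auto
  show "(\<lambda>r. dd P r i) ` {..<P} \<subseteq> {..<P}" using dd_lt assms by auto
qed

lemma card_S: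
  assumes "0 < P" "L \<le> P" "r < P"
  shows "card {i. i < P \<and> dd P r i < L} = L"
proof -
  have "{i. i < P \<and> dd P r i < L} = {i\<in>{..<P}. dd P r i \<in> {..<L}}" by auto
  also have "card \<dots> = card {..<L}"
    by (rule card_preimage_bij[OF bij_dd_i[OF assms(1,3)]]) (use assms in auto)
  finally show ?thesis by simp
qed

lemma card_mod_set:
  assumes "0 < P" "N = q * P" "T \<subseteq> {..<P}"
  shows "card {j. j < N \<and> j mod P \<in> T} = q * card T"
proof -
  have "bij_betw (\<lambda>(a,r). a * P + r) ({..<q} \<times> T) {j. j < N \<and> j mod P \<in> T}"
  proof (rule bij_betw_byWitness[where f'="\<lambda>j. (j div P, j mod P)"])
    show "\<forall>x\<in>{..<q} \<times> T. (\<lambda>j. (j div P, j mod P)) ((\<lambda>(a, r). a * P + r) x) = x"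
      using assms by auto
    show "\<forall>j\<in>{j. j < N \<and> j mod P \<in> T}. (\<lambda>(a, r). a * P + r) (j div P, j mod P) = j"
      by simp
    show "(\<lambda>(a, r). a * P + r) ` ({..<q} \<times> T) \<subseteq> {j. j < N \<and> j mod P \<in> T}"
    proof
      fix j assume "j \<in> (\<lambda>(a, r). a * P + r) ` ({..<q} \<times> T)"
      then obtain a r where ar: "a < q" "r \<in> T" "j = a * P + r" by auto
      have "r < P" using ar assms by auto
      have "a * P + r < a * P + P" using \<open>r < P\<close> by simp
      also have "\<dots> = (a + 1) * P" by simp
      also have "\<dots> \<le> q * P" using ar by (intro mult_right_mono) auto
      finally show "j \<in> {j. j < N \<and> j mod P \<in> T}" using ar \<open>r < P\<close> assms by simp
    qed
    show "(\<lambda>j. (j div P, j mod P)) ` {j. j < N \<and> j mod P \<in> T} \<subseteq> {..<q} \<times> T"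
    proof
      fix x assume "x \<in> (\<lambda>j. (j div P, j mod P)) ` {j. j < N \<and> j mod P \<in> T}"
      then obtain j where j: "j < N" "j mod P \<in> T" "x = (j div P, j mod P)" by auto
      have "j div P < q" using j assms by (simp add: div_less_iff_less_mult)
      thus "x \<in> {..<q} \<times> T" using j by simp
    qed
  qed
  hence "card ({..<q} \<times> T) = card {j. j < N \<and> j mod P \<in> T}" by (rule bij_betw_same_card)
  thus ?thesis by (simp add: card_cartesian_product)
qed

lemma card_row_zero:
  assumes "0 < P" "L \<le> P" "N = q * P" "i < P"
  shows "card {j. j < N \<and> dd P (j mod P) i < L} = q * L"
proof -
  define T where "T = {r. r < P \<and> dd P r i < L}"
  have T: "T \<subseteq> {..<P}" by (auto simp: T_def)
  have cT: "card T = L"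
  proof -
    have "T = {r\<in>{..<P}. dd P r i \<in> {..<L}}" by (auto simp: T_def)
    also have "card \<dots> = card {..<L}"
      by (rule card_preimage_bij[OF bij_dd_r[OF assms(1,4)]]) (use assms in auto)
    finally show ?thesis by simp
  qed
  have "{j. j < N \<and> dd P (j mod P) i < L} = {j. j < N \<and> j mod P \<in> T}"
    using assms by (auto simp: T_def)
  thus ?thesis using card_mod_set[OF assms(1,3) T] cT by simp
qed

lemma sum_split_shift: "(\<Sum>c<M+(n::nat). f c) = (\<Sum>c<M. f c) + (\<Sum>c<n. f (M+c))"
  by (induction n) (simp_all add: add.assoc)

theorem lemma2:
  fixes M K P N :: nat and A B :: "real mat"
  assumes "0 < M" "0 < K" "0 < P" "0 < N"
    and "M \<le> K" "K \<le> P" "P dvd N"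
    and "A \<in> carrier_mat M N"
    and "B \<in> carrier_mat P K"
    and "all_square_submatrices_invertible B"
  shows "\<exists>Z \<in> carrier_mat (K - M) N.
           \<forall>i < P. real (sparsity (row (B * (A @\<^sub>r Z)) i))
                    \<le> real N / real P * real (P - K + M)"
proof -
  define L where "L = K - M"
  have LP: "L \<le> P" using assms(5,6) by (simp add: L_def)
  from assms(7) obtain q0 where "N = P * q0" by (rule dvdE)
  hence q: "N = q0 * P" by (simp add: mult.commute)
  define S where "S j = {i. i < P \<and> dd P (j mod P) i < L}" for j
  have SP: "S j \<subseteq> {..<P}" for j by (auto simp: S_def)
  have cS: "card (S j) = K - M" for j
  proof -
    have "j mod P < P" using assms(3) by simp
    thus ?thesis unfolding S_def using card_S[OF assms(3) LP] by (simp add: L_def)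
  qed
  have "\<forall>j. \<exists>z. z \<in> carrier_vec (K-M) \<and> (\<forall>i\<in>S j. (\<Sum>c<M. B $$ (i,c) * A $$ (c,j)) + (\<Sum>c<K-M. B $$ (i, M+c) * z $ c) = 0)"
  proof
    fix j
    from solve[OF assms(9) assms(10) SP cS assms(5), where a="\<lambda>c. A $$ (c,j)"]
    show "\<exists>z. z \<in> carrier_vec (K-M) \<and> (\<forall>i\<in>S j. (\<Sum>c<M. B $$ (i,c) * A $$ (c,j)) + (\<Sum>c<K-M. B $$ (i, M+c) * z $ c) = 0)"
      by blast
  qed
  then have "\<exists>zf. \<forall>j. zf j \<in> carrier_vec (K-M) \<and> (\<forall>i\<in>S j. (\<Sum>c<M. B $$ (i,c) * A $$ (c,j)) + (\<Sum>c<K-M. B $$ (i, M+c) * zf j $ c) = 0)"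
    by (rule choice)
  then obtain zf where zf0: "\<forall>j. zf j \<in> carrier_vec (K-M) \<and> (\<forall>i\<in>S j. (\<Sum>c<M. B $$ (i,c) * A $$ (c,j)) + (\<Sum>c<K-M. B $$ (i, M+c) * zf j $ c) = 0)"
    by (rule exE)
  have zf: "\<And>j. zf j \<in> carrier_vec (K-M)"
    "\<And>j i. i \<in> S j \<Longrightarrow> (\<Sum>c<M. B $$ (i,c) * A $$ (c,j)) + (\<Sum>c<K-M. B $$ (i, M+c) * zf j $ c) = 0"
    using zf0 by blast+
  define Z where "Z = mat (K-M) N (\<lambda>(r,j). zf j $ r)"
  have Zc: "Z \<in> carrier_mat (K-M) N" by (simp add: Z_def)
  have Zidx: "Z $$ (r,j) = zf j $ r" if "r < K-M" "j < N" for r j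
    unfolding Z_def using that by simp
  have dA: "dim_row A = M" "dim_col A = N" using assms(8) by auto
  have dZ: "dim_row Z = K - M" "dim_col Z = N" using Zc by auto
  have dB: "dim_row B = P" "dim_col B = K" using assms(9) by auto
  have KM: "M + (K - M) = K" using assms(5) by simp
  have AZidx: "(A @\<^sub>r Z) $$ (c,j) = (if c < M then A $$ (c,j) else Z $$ (c-M,j))"
    if c: "c < K" and j: "j < N" for c j
  proof -
    have "(A @\<^sub>r Z) $$ (c,j) = four_block_mat A (0\<^sub>m (dim_row A) 0) Z (0\<^sub>m (dim_row Z) 0) $$ (c,j)"
      unfolding append_rows_def ..
    also have "\<dots> = (if c < M then A $$ (c,j) else Z $$ (c-M,j))"
      by (subst index_mat_four_block(1)) (use c j KM in \<open>simp_all add: dA dZ\<close>)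
    finally show ?thesis .
  qed
  have dAZ: "dim_row (A @\<^sub>r Z) = K" "dim_col (A @\<^sub>r Z) = N"
    using carrier_append_rows[OF assms(8) Zc] KM by auto
  define F where "F = B * (A @\<^sub>r Z)"
  have dF: "dim_row F = P" "dim_col F = N" unfolding F_def using dB dAZ by simp_all
  have Fij: "F $$ (i,j) = (\<Sum>c<K. B $$ (i,c) * (A @\<^sub>r Z) $$ (c,j))" if i: "i < P" and j: "j < N" for i j
  proof -
    have "F $$ (i,j) = row B i \<bullet> col (A @\<^sub>r Z) j" unfolding F_def
      by (rule index_mult_mat(1)) (use i j dB dAZ in simp_all)
    also have "\<dots> = (\<Sum>c\<in>{0..<K}. row B i $ c * col (A @\<^sub>r Z) j $ c)"
      unfolding scalar_prod_def using dAZ by simp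
    also have "\<dots> = (\<Sum>c<K. B $$ (i,c) * (A @\<^sub>r Z) $$ (c,j))"
      unfolding atLeast0LessThan
    proof (rule sum.cong[OF refl])
      fix c assume "c \<in> {..<K}"
      hence c: "c < K" by simp
      have "row B i $ c = B $$ (i,c)" using i c dB by simp
      moreover have "col (A @\<^sub>r Z) j $ c = (A @\<^sub>r Z) $$ (c,j)" using j c dAZ by simp
      ultimately show "row B i $ c * col (A @\<^sub>r Z) j $ c = B $$ (i,c) * (A @\<^sub>r Z) $$ (c,j)" by simp
    qed
    finally show ?thesis .
  qed
  have Fzero: "F $$ (i,j) = 0" if i: "i < P" and j: "j < N" and iS: "i \<in> S j" for i j
  proof -
    have "F $$ (i,j) = (\<Sum>c<M+(K-M). B $$ (i,c) * (A @\<^sub>r Z) $$ (c,j))" using Fij[OF i j] KM by simp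
    also have "\<dots> = (\<Sum>c<M. B $$ (i,c) * (A @\<^sub>r Z) $$ (c,j)) + (\<Sum>c<K-M. B $$ (i,M+c) * (A @\<^sub>r Z) $$ (M+c,j))"
      by (rule sum_split_shift)
    also have "(\<Sum>c<M. B $$ (i,c) * (A @\<^sub>r Z) $$ (c,j)) = (\<Sum>c<M. B $$ (i,c) * A $$ (c,j))"
    proof (rule sum.cong[OF refl])
      fix c assume "c \<in> {..<M}"
      hence "c < M" "c < K" using assms(5) by auto
      thus "B $$ (i,c) * (A @\<^sub>r Z) $$ (c,j) = B $$ (i,c) * A $$ (c,j)" using AZidx[OF _ j] by simp
    qed
    also have "(\<Sum>c<K-M. B $$ (i,M+c) * (A @\<^sub>r Z) $$ (M+c,j)) = (\<Sum>c<K-M. B $$ (i,M+c) * zf j $ c)"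
    proof (rule sum.cong[OF refl])
      fix c assume "c \<in> {..<K-M}"
      hence c: "c < K - M" "M + c < K" by auto
      have "(A @\<^sub>r Z) $$ (M+c,j) = Z $$ (c,j)" using AZidx[OF c(2) j] by simp
      also have "\<dots> = zf j $ c" using Zidx[OF c(1) j] .
      finally show "B $$ (i,M+c) * (A @\<^sub>r Z) $$ (M+c,j) = B $$ (i,M+c) * zf j $ c" by simp
    qed
    also have "(\<Sum>c<M. B $$ (i,c) * A $$ (c,j)) + (\<Sum>c<K-M. B $$ (i,M+c) * zf j $ c) = 0"
      by (rule zf(2)[OF iS])
    finally show ?thesis .
  qed
  show ?thesis
  proof (intro bexI[OF _ Zc] allI impI)
    fix i assume i: "i < P"
    have "sparsity (row F i) = card {j. j < N \<and> F $$ (i,j) \<noteq> 0}"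
    proof -
      have "{j. j < dim_vec (row F i) \<and> row F i $ j \<noteq> 0} = {j. j < N \<and> F $$ (i,j) \<noteq> 0}"
        using i dF by auto
      thus ?thesis unfolding sparsity_def by simp
    qed
    also have "\<dots> \<le> card ({..<N} - {j. j < N \<and> dd P (j mod P) i < L})"
    proof (rule card_mono)
      show "finite ({..<N} - {j. j < N \<and> dd P (j mod P) i < L})" by simp
      show "{j. j < N \<and> F $$ (i,j) \<noteq> 0} \<subseteq> {..<N} - {j. j < N \<and> dd P (j mod P) i < L}"
      proof
        fix j assume "j \<in> {j. j < N \<and> F $$ (i,j) \<noteq> 0}"
        hence j: "j < N" "F $$ (i,j) \<noteq> 0" by auto
        have "\<not> dd P (j mod P) i < L"
        proof
          assume "dd P (j mod P) i < L"
          hence "i \<in> S j" using i unfolding S_def by blast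
          hence "F $$ (i,j) = 0" by (rule Fzero[OF i j(1)])
          thus False using j(2) by contradiction
        qed
        thus "j \<in> {..<N} - {j. j < N \<and> dd P (j mod P) i < L}" using j(1) by blast
      qed
    qed
    also have "\<dots> = N - q0 * L"
    proof -
      have sub: "{j. j < N \<and> dd P (j mod P) i < L} \<subseteq> {..<N}" by blast
      have "card ({..<N} - {j. j < N \<and> dd P (j mod P) i < L}) = card {..<N} - card {j. j < N \<and> dd P (j mod P) i < L}"
        by (rule card_Diff_subset[OF finite_subset[OF sub finite_lessThan] sub])
      thus ?thesis using card_row_zero[OF assms(3) LP q i] by simp
    qed
    also have "N - q0 * L = q0 * (P - K + M)"
    proof -
      have "P - L = P - K + M" using assms(5,6) by (simp add: L_def)
      moreover have "q0 * (P - L) = q0 * P - q0 * L" by (rule diff_mult_distrib2)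
      ultimately show ?thesis using q by (simp add: mult.commute)
    qed
    finally have le: "sparsity (row F i) \<le> q0 * (P - K + M)" .
    have e: "real N / real P = real q0" using q assms(3) by simp
    have "real (sparsity (row F i)) \<le> real (q0 * (P - K + M))" using le by (rule of_nat_mono)
    also have "\<dots> = real N / real P * real (P - K + M)" unfolding e by simp
    finally show "real (sparsity (row (B * (A @\<^sub>r Z)) i)) \<le> real N / real P * real (P - K + M)"
      unfolding F_def .
  qed
qed

end
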